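(* Let $\Gamma$ be a compact connected real analytic curve on a smooth surface $\Sigma$ in $\mathbb{R}^3$. Assume that $\Gamma$ is a line of curvature of $\Sigma$ along which the principal curvature (the normal curvature of $\Sigma$ in the direction tangent to $\Gamma$) vanishes only at finitely many points. If $\Gamma$ has constant geodesic curvature $c$ on $\Sigma$, then there exists a sphere $S$ of radius $\frac{1}{|c|}$ (if $c=0$, $S$ is understood to be a plane) such that $\Sigma$ intersects $S$ orthogonally along $\Gamma$. If instead $\Gamma$ is only a piecewise real analytic curve (with the other hypotheses unchanged), the same conclusion holds with the single sphere replaced by a union of spheres (of radius $\frac{1}{|c|}$, or planes if $c=0$) which intersects $\Sigma$ orthogonally along $\Gamma$.
   Context: A line of curvature on $\Sigma$ is a curve whose tangent vector is at every point a principal direction of $\Sigma$. *)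

theory Defs
  imports "HOL-Analysis.Analysis"
begin

fun Ck_on :: "nat \<Rightarrow> 'a::euclidean_space set \<Rightarrow> ('a \<Rightarrow> 'b::euclidean_space) \<Rightarrow> bool" where
  "Ck_on 0 U f = continuous_on U f"
| "Ck_on (Suc k) U f =
     (\<exists>f'. (\<forall>x\<in>U. (f has_derivative f' x) (at x)) \<and> (\<forall>v. Ck_on k U (\<lambda>x. f' x v)))"

definition smooth_on :: "'a::euclidean_space set \<Rightarrow> ('a \<Rightarrow> 'b::euclidean_space) \<Rightarrow> bool" where
  "smooth_on U f \<longleftrightarrow> (\<forall>k. Ck_on k U f)"

definition real_analytic_on :: "(real \<Rightarrow> 'b::real_normed_vector) \<Rightarrow> real set \<Rightarrow> bool" where
  "real_analytic_on f I \<longleftrightarrow>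
     (\<forall>x\<in>I. \<exists>r>0. \<exists>a::nat \<Rightarrow> 'b. \<forall>y. \<bar>y - x\<bar> < r \<longrightarrow> (\<lambda>n. (y - x) ^ n *\<^sub>R a n) sums f y)"

definition smooth_surface :: "(real^3) set \<Rightarrow> bool" where
  "smooth_surface M \<longleftrightarrow>
     (\<forall>p\<in>M. \<exists>(V::(real^2) set) W (\<phi>::real^2 \<Rightarrow> real^3).
        open V \<and> open W \<and> p \<in> W \<and> smooth_on V \<phi> \<and> \<phi> ` V = M \<inter> W \<and> inj_on \<phi> V \<and>
        continuous_on (M \<inter> W) (inv_into V \<phi>) \<and>
        (\<forall>u\<in>V. inj (frechet_derivative \<phi> (at u))))"

definition tangent_space :: "(real^3) set \<Rightarrow> real^3 \<Rightarrow> (real^3) set" where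
  "tangent_space M p =
     {v. \<exists>g e. e > 0 \<and> (\<forall>t\<in>{-e<..<e}. g t \<in> M) \<and> g 0 = p \<and> (g has_vector_derivative v) (at 0)}"

definition unit_normal :: "(real^3) set \<Rightarrow> real^3 \<Rightarrow> real^3 \<Rightarrow> bool" where
  "unit_normal M p n \<longleftrightarrow> norm n = 1 \<and> (\<forall>v\<in>tangent_space M p. n \<bullet> v = 0)"

text \<open>shape_eigen M p n v k: for a local (differentiable) unit normal field N of M near p
with N p = n, the differential of the Gauss map satisfies dN_p(v) = -k v, i.e. v is an
eigenvector of the shape operator with principal curvature k (w.r.t. the normal n).\<close>
definition shape_eigen :: "(real^3) set \<Rightarrow> real^3 \<Rightarrow> real^3 \<Rightarrow> real^3 \<Rightarrow> real \<Rightarrow> bool" where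
  "shape_eigen M p n v k \<longleftrightarrow>
     (\<exists>U N D. open U \<and> p \<in> U \<and> (\<forall>x\<in>M \<inter> U. unit_normal M x (N x)) \<and> N p = n \<and>
        (N has_derivative D) (at p) \<and> D v = - k *\<^sub>R v)"

definition principal_direction :: "(real^3) set \<Rightarrow> real^3 \<Rightarrow> real^3 \<Rightarrow> bool" where
  "principal_direction M p v \<longleftrightarrow>
     v \<in> tangent_space M p \<and> v \<noteq> 0 \<and> (\<exists>n k. shape_eigen M p n v k)"

definition principal_curvature_vanishes :: "(real^3) set \<Rightarrow> real^3 \<Rightarrow> real^3 \<Rightarrow> bool" where
  "principal_curvature_vanishes M p v \<longleftrightarrow> (\<exists>n. shape_eigen M p n v 0)"

definition vel :: "(real \<Rightarrow> real^3) \<Rightarrow> real \<Rightarrow> real^3" where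
  "vel g t = vector_derivative g (at t)"

definition acc :: "(real \<Rightarrow> real^3) \<Rightarrow> real \<Rightarrow> real^3" where
  "acc g t = vector_derivative (\<lambda>s. vector_derivative g (at s)) (at t)"

definition geodesic_curvature :: "(real \<Rightarrow> real^3) \<Rightarrow> (real \<Rightarrow> real^3) \<Rightarrow> real \<Rightarrow> real" where
  "geodesic_curvature g n t = (acc g t \<bullet> cross3 (n t) (vel g t)) / norm (vel g t) ^ 3"

text \<open>g is a regular real analytic parametrisation of a compact connected embedded curve:
either an arc g|[a,b] (g analytic on an open interval around [a,b]) or a closed curve
(g analytic on R and (b-a)-periodic, injective on one period).\<close>
definition analytic_curve_param :: "(real \<Rightarrow> real^3) \<Rightarrow> real \<Rightarrow> real \<Rightarrow> bool" where
  "analytic_curve_param g a b \<longleftrightarrow> a < b \<and>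
     ((\<exists>I. open I \<and> {a..b} \<subseteq> I \<and> real_analytic_on g I \<and> (\<forall>t\<in>I. vel g t \<noteq> 0)
          \<and> inj_on g {a..b})
      \<or> (real_analytic_on g UNIV \<and> (\<forall>t. g (t + (b - a)) = g t) \<and> (\<forall>t. vel g t \<noteq> 0)
          \<and> inj_on g {a..<b}))"

definition lc_piece_hyps ::
    "(real^3) set \<Rightarrow> real \<Rightarrow> (real \<Rightarrow> real^3) \<Rightarrow> (real \<Rightarrow> real^3) \<Rightarrow> real set \<Rightarrow> bool" where
  "lc_piece_hyps M c g n J \<longleftrightarrow>
     (\<forall>t\<in>J. g t \<in> M \<and> principal_direction M (g t) (vel g t) \<and> geodesic_curvature g n t = c)
     \<and> finite {t\<in>J. principal_curvature_vanishes M (g t) (vel g t)}"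

definition normal_field_along :: "(real^3) set \<Rightarrow> (real \<Rightarrow> real^3) \<Rightarrow> (real \<Rightarrow> real^3) \<Rightarrow> real set \<Rightarrow> bool" where
  "normal_field_along M g n J \<longleftrightarrow> continuous_on J n \<and> (\<forall>t\<in>J. unit_normal M (g t) (n t))"

text \<open>Piecewise real analytic regular embedded curve g|[a,b] (arc, or closed if g a = g b)
with break points s 0 = a < s 1 < ... < s k = b; each piece agrees with a regular real
analytic curve defined on an open interval around the piece.\<close>
definition piecewise_analytic_param ::
    "(real \<Rightarrow> real^3) \<Rightarrow> real \<Rightarrow> real \<Rightarrow> (nat \<Rightarrow> real) \<Rightarrow> nat \<Rightarrow> bool" where
  "piecewise_analytic_param g a b s k \<longleftrightarrow> a < b \<and> k \<ge> 1 \<and> s 0 = a \<and> s k = b \<and>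
     (\<forall>i<k. s i < s (Suc i)) \<and> continuous_on {a..b} g \<and>
     inj_on g {a..<b} \<and> inj_on g {a<..b}"

definition analytic_piece ::
    "(real \<Rightarrow> real^3) \<Rightarrow> (real \<Rightarrow> real^3) \<Rightarrow> real \<Rightarrow> real \<Rightarrow> bool" where
  "analytic_piece g h \<alpha> \<beta> \<longleftrightarrow>
     (\<exists>I. open I \<and> {\<alpha>..\<beta>} \<subseteq> I \<and> real_analytic_on h I \<and> (\<forall>t\<in>I. vel h t \<noteq> 0)) \<and>
     (\<forall>t\<in>{\<alpha>..\<beta>}. h t = g t)"

definition sphere_or_plane :: "real \<Rightarrow> (real^3) set \<Rightarrow> bool" where
  "sphere_or_plane c S \<longleftrightarrow>
     (c \<noteq> 0 \<and> (\<exists>z. S = sphere z (1 / \<bar>c\<bar>))) \<or>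
     (c = 0 \<and> (\<exists>u d. u \<noteq> 0 \<and> S = {x. u \<bullet> x = d}))"

definition meet_orthogonally_along :: "(real^3) set \<Rightarrow> (real^3) set \<Rightarrow> (real^3) set \<Rightarrow> bool" where
  "meet_orthogonally_along M S A \<longleftrightarrow> A \<subseteq> M \<inter> S \<and>
     (\<forall>p\<in>A. \<forall>n m. unit_normal M p n \<longrightarrow> unit_normal S p m \<longrightarrow> n \<bullet> m = 0)"

end

theory Submission
  imports Defs
begin


lemma curve_in_tangent:
  assumes "open V" "u \<in> V" "\<phi> ` V \<subseteq> M" "(\<phi> has_derivative f) (at u)"
  shows "f e \<in> tangent_space M (\<phi> u)"
proof -
  obtain \<epsilon> where e: "\<epsilon> > 0" "ball u \<epsilon> \<subseteq> V" using assms(1,2) open_contains_ball by blast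
  define d where "d = \<epsilon> / (norm e + 1)"
  have np: "0 < norm e + 1" by (simp add: add_nonneg_pos)
  have d: "d > 0" using e by (auto simp: d_def intro!: divide_pos_pos add_nonneg_pos)
  have "u + t *\<^sub>R e \<in> V" if "t \<in> {-d<..<d}" for t
  proof -
    have "norm (t *\<^sub>R e) = \<bar>t\<bar> * norm e" by simp
    also have "\<dots> \<le> \<bar>t\<bar> * (norm e + 1)" using that by (simp add: mult_left_mono)
    also have "\<dots> < d * (norm e + 1)" using that np by (intro mult_strict_right_mono) auto
    also have "\<dots> = \<epsilon>" using np by (simp add: d_def)
    finally show ?thesis using e(2) by (auto simp: dist_norm)
  qed
  hence inM: "\<forall>t\<in>{-d<..<d}. (\<phi> \<circ> (\<lambda>t. u + t *\<^sub>R e)) t \<in> M" using assms(3) by auto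
  have lin: "linear f" using assms(4) has_derivative_linear by blast
  have "((\<lambda>t. u + t *\<^sub>R e) has_derivative (\<lambda>t. t *\<^sub>R e)) (at 0)"
    by (auto intro!: derivative_eq_intros)
  hence "((\<phi> \<circ> (\<lambda>t. u + t *\<^sub>R e)) has_derivative (f \<circ> (\<lambda>t. t *\<^sub>R e))) (at 0)"
    using assms(4) by (intro diff_chain_at) auto
  moreover have "f \<circ> (\<lambda>t. t *\<^sub>R e) = (\<lambda>t. t *\<^sub>R f e)"
    using lin by (auto simp: linear_scale o_def)
  ultimately have "((\<phi> \<circ> (\<lambda>t. u + t *\<^sub>R e)) has_vector_derivative f e) (at 0)"
    by (simp add: has_vector_derivative_def)
  thus ?thesis unfolding tangent_space_def using inM d by (intro CollectI exI[of _ "\<phi> \<circ> (\<lambda>t. u + t *\<^sub>R e)"] exI[of _ d]) auto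
qed

lemma surf_tangent:
  assumes "smooth_surface M" "p \<in> M"
  shows "\<exists>v1 v2. v1 \<in> tangent_space M p \<and> v2 \<in> tangent_space M p \<and> cross3 v1 v2 \<noteq> 0"
proof -
  obtain V W and \<phi> :: "real^2 \<Rightarrow> real^3" where VW: "open V" "open W" "p \<in> W" "smooth_on V \<phi>" "\<phi> ` V = M \<inter> W"
     "\<forall>u\<in>V. inj (frechet_derivative \<phi> (at u))"
    using assms unfolding smooth_surface_def by metis
  obtain u where u: "u \<in> V" "p = \<phi> u" using VW assms(2) by (metis IntI imageE)
  have "Ck_on 1 V \<phi>" using VW(4) unfolding smooth_on_def by blast
  then obtain f' where f': "\<forall>x\<in>V. (\<phi> has_derivative f' x) (at x)" by auto
  have fu: "(\<phi> has_derivative f' u) (at u)" using f' u by auto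
  have inj: "inj (f' u)" using VW(6) u frechet_derivative_at[OF fu] by auto
  have lin: "linear (f' u)" using fu has_derivative_linear by blast
  have sub: "\<phi> ` V \<subseteq> M" using VW by auto
  let ?v1 = "f' u (axis 1 1)" and ?v2 = "f' u (axis 2 1)"
  have t1: "?v1 \<in> tangent_space M p" and t2: "?v2 \<in> tangent_space M p"
    using curve_in_tangent[OF VW(1) u(1) sub fu] u by auto
  have "cross3 ?v1 ?v2 \<noteq> 0"
  proof
    assume "cross3 ?v1 ?v2 = 0"
    hence "collinear {0, ?v1, ?v2}" by (simp add: cross_eq_0)
    then consider "?v1 = 0" | "?v2 = 0" | c where "?v2 = c *\<^sub>R ?v1" unfolding collinear_lemma by blast
    thus False
    proof cases
      case 1 hence "f' u (axis 1 1) = f' u 0" using lin linear_0 by metis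
      thus False using inj by (metis axis_eq_0_iff one_neq_zero injD)
    next
      case 2 hence "f' u (axis 2 1) = f' u 0" using lin linear_0 by metis
      thus False using inj by (metis axis_eq_0_iff one_neq_zero injD)
    next
      case 3 hence "f' u (axis 2 1) = f' u (c *\<^sub>R axis 1 1)" using lin by (simp add: linear_scale)
      hence "axis 2 1 = (c *\<^sub>R axis 1 1 :: real^2)" using inj injD by metis
      hence "(axis 2 1 :: real^2) $ 2 = (c *\<^sub>R axis 1 1 :: real^2) $ 2" by simp
      thus False by (simp add: axis_def)
    qed
  qed
  thus ?thesis using t1 t2 by blast
qed



lemma orth_both_parallel:
  fixes x v1 v2 :: "real^3"
  assumes "x \<bullet> v1 = 0" "x \<bullet> v2 = 0" "cross3 v1 v2 \<noteq> 0"
  shows "\<exists>c. x = c *\<^sub>R cross3 v1 v2"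
proof -
  have "cross3 (cross3 v1 v2) x = (x \<bullet> v1) *\<^sub>R v2 - (x \<bullet> v2) *\<^sub>R v1"
    using exhaust_3 by (force simp add: cross3_simps)
  hence "cross3 (cross3 v1 v2) x = 0" using assms by simp
  hence "collinear {0, cross3 v1 v2, x}" by (simp add: cross_eq_0)
  thus ?thesis using assms(3) unfolding collinear_lemma by auto
qed

lemma orth_complement_parallel:
  fixes m q :: "real^3"
  assumes "\<And>v. v \<bullet> q = 0 \<Longrightarrow> m \<bullet> v = 0" "q \<noteq> 0"
  shows "m = ((m \<bullet> q) / (q \<bullet> q)) *\<^sub>R q"
proof -
  define v where "v = m - ((m \<bullet> q) / (q \<bullet> q)) *\<^sub>R q"
  have qq: "q \<bullet> q \<noteq> 0" using assms(2) by simp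
  have "v \<bullet> q = 0" using qq by (simp add: v_def inner_diff_left)
  hence "m \<bullet> v = 0" using assms(1) by blast
  hence "v \<bullet> v = 0" using \<open>v \<bullet> q = 0\<close> by (simp add: v_def inner_diff_left inner_commute)
  thus ?thesis by (simp add: v_def)
qed

lemma sphere_tangent:
  fixes p z v :: "real^3"
  assumes "norm (p - z) = r" "r > 0" "v \<bullet> (p - z) = 0"
  shows "v \<in> tangent_space (sphere z r) p"
proof (cases "v = 0")
  case True
  have "((\<lambda>t. p) has_vector_derivative 0) (at 0)" by (rule has_vector_derivative_const)
  thus ?thesis using True assms unfolding tangent_space_def
    by (intro CollectI exI[of _ "\<lambda>t. p"] exI[of _ 1]) (auto simp: dist_norm norm_minus_commute)
next
  case False
  define s where "s = norm v / r"
  have s: "s > 0" using False assms by (simp add: s_def)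
  define g where "g t = z + cos (s * t) *\<^sub>R (p - z) + (sin (s * t) / s) *\<^sub>R v" for t
  have "norm (g t - z) = r" for t
  proof -
    have "(norm (g t - z))\<^sup>2 = (cos (s*t))\<^sup>2 * (norm (p - z))\<^sup>2 + (sin (s*t) / s)\<^sup>2 * (norm v)\<^sup>2"
      unfolding g_def power2_norm_eq_inner using assms(3)
      by (simp add: inner_add_left inner_add_right inner_commute power2_eq_square algebra_simps)
    also have "\<dots> = r\<^sup>2" using s assms
      by (simp add: s_def power_divide field_simps) (metis sin_cos_squared_add2 mult_1 distrib_right power2_eq_square mult.commute)
    finally show ?thesis using assms(2) by (simp add: power2_eq_iff_nonneg)
  qed
  hence inS: "g t \<in> sphere z r" for t by (simp add: dist_norm norm_minus_commute)
  have "(g has_vector_derivative (- (s * sin (s * 0)) *\<^sub>R (p - z) + (cos (s * 0) * s / s) *\<^sub>R v)) (at 0)"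
    unfolding g_def by (auto intro!: derivative_eq_intros)
  hence "(g has_vector_derivative v) (at 0)" using s by simp
  moreover have "g 0 = p" by (simp add: g_def)
  ultimately show ?thesis unfolding tangent_space_def using inS
    by (intro CollectI exI[of _ g] exI[of _ 1]) auto
qed

lemma plane_tangent:
  fixes p u v :: "real^3"
  assumes "u \<bullet> p = d" "u \<bullet> v = 0"
  shows "v \<in> tangent_space {x. u \<bullet> x = d} p"
proof -
  have "((\<lambda>t. p + t *\<^sub>R v) has_vector_derivative v) (at 0)"
    by (auto intro!: derivative_eq_intros)
  thus ?thesis unfolding tangent_space_def using assms
    by (intro CollectI exI[of _ "\<lambda>t. p + t *\<^sub>R v"] exI[of _ 1]) (auto simp: inner_add_right)
qed



lemma powser_C2:
  fixes f :: "real \<Rightarrow> 'b::euclidean_space"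
  assumes r: "r > 0" and sm: "\<And>y. \<bar>y - t\<bar> < r \<Longrightarrow> (\<lambda>n. (y - t) ^ n *\<^sub>R a n) sums f y"
  shows "f differentiable (at t) \<and> (\<lambda>s. vector_derivative f (at s)) differentiable (at t)"
proof -
  define c where "c b n = a n \<bullet> b" for b n
  have sb: "(\<lambda>n. c b n * (y - t) ^ n) sums (f y \<bullet> b)" if "\<bar>y - t\<bar> < r" for y b
  proof -
    have "(\<lambda>n. ((y - t) ^ n *\<^sub>R a n) \<bullet> b) sums (f y \<bullet> b)"
      using bounded_linear.sums[OF bounded_linear_inner_left sm[OF that]] .
    thus ?thesis by (simp add: c_def mult.commute)
  qed
  have summ: "summable (\<lambda>n. c b n * z ^ n)" if "norm z < r" for z b
    using sb[of "z + t" b] that by (auto simp: sums_iff)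
  have summ1: "summable (\<lambda>n. diffs (c b) n * z ^ n)" if "norm z < r" for z b
    using termdiff_converges[of z r "c b"] summ that by blast
  define F where "F b y = (\<Sum>n. c b n * (y - t) ^ n)" for b y
  define F1 where "F1 b y = (\<Sum>n. diffs (c b) n * (y - t) ^ n)" for b y
  define F2 where "F2 b y = (\<Sum>n. diffs (diffs (c b)) n * (y - t) ^ n)" for b y
  have Feq: "F b y = f y \<bullet> b" if "\<bar>y - t\<bar> < r" for b y
    using sb[OF that] unfolding F_def by (simp add: sums_iff)
  have dF: "((F b) has_field_derivative F1 b y) (at y)" if "\<bar>y - t\<bar> < r" for b y
  proof -
    have "((\<lambda>z. \<Sum>n. c b n * z^n) has_field_derivative (\<Sum>n. diffs (c b) n * (y - t)^n)) (at ((y - t) + t - t))"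
      using termdiffs_strong'[of r "c b" "y - t"] summ that by auto
    hence "((\<lambda>x. (\<lambda>z. \<Sum>n. c b n * z^n) (x + - t)) has_field_derivative (\<Sum>n. diffs (c b) n * (y - t)^n)) (at y)"
      using DERIV_shift[of "\<lambda>z. \<Sum>n. c b n * z^n" _ y "- t"] by simp
    thus ?thesis unfolding F_def F1_def by simp
  qed
  have dF1: "((F1 b) has_field_derivative F2 b y) (at y)" if "\<bar>y - t\<bar> < r" for b y
  proof -
    have "((\<lambda>z. \<Sum>n. diffs (c b) n * z^n) has_field_derivative (\<Sum>n. diffs (diffs (c b)) n * (y - t)^n)) (at ((y - t) + t - t))"
      using termdiffs_strong'[of r "diffs (c b)" "y - t"] summ1 that by auto
    hence "((\<lambda>x. (\<lambda>z. \<Sum>n. diffs (c b) n * z^n) (x + - t)) has_field_derivative (\<Sum>n. diffs (diffs (c b)) n * (y - t)^n)) (at y)"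
      using DERIV_shift[of "\<lambda>z. \<Sum>n. diffs (c b) n * z^n" _ y "- t"] by simp
    thus ?thesis unfolding F1_def F2_def by simp
  qed
  define B where "B = ball t r"
  have oB: "open B" and tB: "t \<in> B" using r by (auto simp: B_def)
  have inB: "y \<in> B \<longleftrightarrow> \<bar>y - t\<bar> < r" for y by (simp add: B_def dist_real_def abs_minus_commute)
  have dG: "((\<lambda>y. \<Sum>b\<in>Basis. F b y *\<^sub>R b) has_vector_derivative (\<Sum>b\<in>Basis. F1 b y *\<^sub>R b)) (at y)"
    if "y \<in> B" for y
    using dF that inB by (auto intro!: derivative_eq_intros simp: has_real_derivative_iff_has_vector_derivative[symmetric])
  have fG: "f y = (\<Sum>b\<in>Basis. F b y *\<^sub>R b)" if "y \<in> B" for y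
    using Feq that inB by (simp add: euclidean_representation)
  have df: "(f has_vector_derivative (\<Sum>b\<in>Basis. F1 b y *\<^sub>R b)) (at y)" if "y \<in> B" for y
    by (rule has_vector_derivative_transform_within_open[OF dG[OF that] oB that]) (simp add: fG)
  have vd: "vector_derivative f (at y) = (\<Sum>b\<in>Basis. F1 b y *\<^sub>R b)" if "y \<in> B" for y
    using vector_derivative_at[OF df[OF that]] .
  have dG1: "((\<lambda>y. \<Sum>b\<in>Basis. F1 b y *\<^sub>R b) has_vector_derivative (\<Sum>b\<in>Basis. F2 b t *\<^sub>R b)) (at t)"
    using dF1 tB inB by (auto intro!: derivative_eq_intros simp: has_real_derivative_iff_has_vector_derivative[symmetric])
  have "((\<lambda>s. vector_derivative f (at s)) has_vector_derivative (\<Sum>b\<in>Basis. F2 b t *\<^sub>R b)) (at t)"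
    by (rule has_vector_derivative_transform_within_open[OF dG1 oB tB]) (simp add: vd)
  thus ?thesis using df[OF tB] unfolding differentiable_def has_vector_derivative_def by blast
qed

lemma analytic_C2:
  fixes f :: "real \<Rightarrow> 'b::euclidean_space"
  assumes "real_analytic_on f I" "t \<in> I"
  shows "f differentiable (at t) \<and> (\<lambda>s. vector_derivative f (at s)) differentiable (at t)"
proof -
  obtain r a where "r > 0" "\<And>y. \<bar>y - t\<bar> < r \<Longrightarrow> (\<lambda>n. (y - t) ^ n *\<^sub>R a n) sums f y"
    using assms unfolding real_analytic_on_def by blast
  thus ?thesis by (rule powser_C2)
qed



lemma cross_cross_expand:
  fixes a b c :: "real^3"
  shows "cross3 a (cross3 b c) = (a \<bullet> c) *\<^sub>R b - (a \<bullet> b) *\<^sub>R c"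
  using exhaust_3 by (force simp add: cross3_simps)

lemma triple_swap:
  fixes a b c :: "real^3"
  shows "a \<bullet> cross3 b c = - (b \<bullet> cross3 a c)"
  by (simp add: cross3_simps)

lemma key_identity:
  fixes n T A :: "real^3"
  assumes "n \<bullet> T = 0"
  shows "(T \<bullet> T) *\<^sub>R cross3 n A - (T \<bullet> A) *\<^sub>R cross3 n T = - (A \<bullet> cross3 n T) *\<^sub>R T"
proof -
  have "(T \<bullet> T) *\<^sub>R cross3 n A - (T \<bullet> A) *\<^sub>R cross3 n T = cross3 n (cross3 T (cross3 A T))"
    by (simp add: cross_cross_expand cross_mult_right Cross3.right_diff_distrib inner_commute)
  also have "\<dots> = (n \<bullet> cross3 A T) *\<^sub>R T"
    using assms by (simp only: cross_cross_expand[of n T "cross3 A T"]) simp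
  also have "n \<bullet> cross3 A T = - (A \<bullet> cross3 n T)" by (rule triple_swap)
  finally show ?thesis by simp
qed



lemma bb_cross3: "bounded_bilinear cross3"
  using bilinear_cross bilinear_conv_bounded_bilinear by blast

lemma deriv_b:
  fixes n T :: "real \<Rightarrow> real^3"
  assumes Hn: "(n has_vector_derivative n') (at t within S)"
    and HT: "(T has_vector_derivative A) (at t within S)" and nz: "T t \<noteq> 0"
  shows "((\<lambda>s. inverse (norm (T s)) *\<^sub>R cross3 (n s) (T s)) has_vector_derivative
     (inverse (norm (T t)) *\<^sub>R (cross3 (n t) A + cross3 n' (T t))
       - ((A \<bullet> sgn (T t)) / (norm (T t))\<^sup>2) *\<^sub>R cross3 (n t) (T t))) (at t within S)"
proof -
  have dn: "(n has_derivative (\<lambda>h. h *\<^sub>R n')) (at t within S)" using Hn by (simp add: has_vector_derivative_def)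
  have dT: "(T has_derivative (\<lambda>h. h *\<^sub>R A)) (at t within S)" using HT by (simp add: has_vector_derivative_def)
  have dnorm: "((\<lambda>s. norm (T s)) has_derivative (\<lambda>h. (h *\<^sub>R A) \<bullet> sgn (T t))) (at t within S)"
    using has_derivative_compose[OF dT has_derivative_norm[OF nz]] .
  have nz': "norm (T t) \<noteq> 0" using nz by simp
  have dinv: "((\<lambda>s. inverse (norm (T s))) has_derivative
      (\<lambda>h. - (inverse (norm (T t)) * ((h *\<^sub>R A) \<bullet> sgn (T t)) * inverse (norm (T t))))) (at t within S)"
    using Deriv.has_derivative_inverse[OF nz' dnorm] .
  have dc: "((\<lambda>s. cross3 (n s) (T s)) has_derivative (\<lambda>h. cross3 (n t) (h *\<^sub>R A) + cross3 (h *\<^sub>R n') (T t))) (at t within S)"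
    using bounded_bilinear.FDERIV[OF bb_cross3 dn dT] .
  have d: "((\<lambda>s. inverse (norm (T s)) *\<^sub>R cross3 (n s) (T s)) has_derivative
     (\<lambda>h. inverse (norm (T t)) *\<^sub>R (cross3 (n t) (h *\<^sub>R A) + cross3 (h *\<^sub>R n') (T t)) +
          (- (inverse (norm (T t)) * ((h *\<^sub>R A) \<bullet> sgn (T t)) * inverse (norm (T t)))) *\<^sub>R cross3 (n t) (T t))) (at t within S)"
    using has_derivative_scaleR[OF dinv dc] .
  show ?thesis unfolding has_vector_derivative_def
    apply (rule has_derivative_eq_rhs[OF d])
    apply (rule ext)
    apply (simp add: cross_mult_left cross_mult_right scaleR_add_right scaleR_diff_right power2_eq_square field_simps)
    done
qed



lemma normals_pm:
  assumes "smooth_surface M" "p \<in> M" "unit_normal M p n1" "unit_normal M p n2"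
  shows "n2 = n1 \<or> n2 = - n1"
proof -
  obtain v1 v2 where v: "v1 \<in> tangent_space M p" "v2 \<in> tangent_space M p" "cross3 v1 v2 \<noteq> 0"
    using surf_tangent[OF assms(1,2)] by blast
  obtain c1 where c1: "n1 = c1 *\<^sub>R cross3 v1 v2"
    using orth_both_parallel[of n1 v1 v2] v assms(3) unfolding unit_normal_def by blast
  obtain c2 where c2: "n2 = c2 *\<^sub>R cross3 v1 v2"
    using orth_both_parallel[of n2 v1 v2] v assms(4) unfolding unit_normal_def by blast
  have "\<bar>c1\<bar> * norm (cross3 v1 v2) = \<bar>c2\<bar> * norm (cross3 v1 v2)"
    using assms(3,4) c1 c2 unfolding unit_normal_def by simp
  hence "\<bar>c1\<bar> = \<bar>c2\<bar>" using v(3) by simp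
  hence "c2 = c1 \<or> c2 = - c1" by (auto simp: abs_if split: if_splits)
  thus ?thesis using c1 c2 by auto
qed

lemma n_deriv:
  assumes surf: "smooth_surface M" and tS: "t \<in> S"
    and ncont: "continuous_on S n" and nn: "\<forall>s\<in>S. unit_normal M (h s) (n s)"
    and hM: "\<forall>s\<in>S. h s \<in> M" and hd: "(h has_vector_derivative T) (at t)"
    and pd: "principal_direction M (h t) T"
  shows "\<exists>\<kappa>. (n has_vector_derivative (\<kappa> *\<^sub>R T)) (at t within S)"
proof -
  obtain n0 k where "shape_eigen M (h t) n0 T k" using pd unfolding principal_direction_def by blast
  then obtain U N D where UND: "open U" "h t \<in> U" "\<forall>x\<in>M \<inter> U. unit_normal M x (N x)" "N (h t) = n0"
      "(N has_derivative D) (at (h t))" "D T = - k *\<^sub>R T"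
    unfolding shape_eigen_def by blast
  have "n0 = n t \<or> n0 = - n t"
    using normals_pm[OF surf hM[rule_format, OF tS] nn[rule_format, OF tS]] UND(2,3,4) hM tS by auto
  then obtain \<sigma> :: real where sig: "\<sigma> = 1 \<or> \<sigma> = -1" "n t = \<sigma> *\<^sub>R N (h t)"
    using UND(4) by (metis scaleR_minus1_left scaleR_one minus_minus)
  define Nt where "Nt s = \<sigma> *\<^sub>R N (h s)" for s
  have hcont: "continuous (at t) h"
    using hd has_vector_derivative_continuous by blast
  have Ncont: "continuous (at (h t)) N" using UND(5) has_derivative_continuous by blast
  have "continuous (at t) (\<lambda>s. N (h s))" using continuous_at_compose[OF hcont] Ncont
    by (simp add: o_def continuous_at_compose[OF hcont Ncont, unfolded o_def])
  hence c1: "continuous (at t within S) Nt" unfolding Nt_def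
    by (intro continuous_intros) (auto intro: continuous_at_imp_continuous_within)
  have c2: "continuous (at t within S) n" using ncont tS continuous_on_eq_continuous_within by blast
  have "((\<lambda>s. n s - Nt s) \<longlongrightarrow> n t - Nt t) (at t within S)"
    using c1 c2 unfolding continuous_within by (intro tendsto_intros)
  hence "((\<lambda>s. n s - Nt s) \<longlongrightarrow> 0) (at t within S)" using sig by (simp add: Nt_def)
  hence "((\<lambda>s. norm (n s - Nt s)) \<longlongrightarrow> 0) (at t within S)" by (rule tendsto_norm_zero)
  hence ev1: "eventually (\<lambda>s. norm (n s - Nt s) < 1) (at t within S)"
    by (rule order_tendstoD(2)) simp
  have "(h \<longlongrightarrow> h t) (at t within S)"
    using hcont continuous_at_imp_continuous_within continuous_within by blast
  hence ev2: "eventually (\<lambda>s. h s \<in> U) (at t within S)"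
    using UND(1,2) by (rule topological_tendstoD)
  have "eventually (\<lambda>s. s \<in> S \<longrightarrow> n s = Nt s) (at t within S)"
    using ev1 ev2
  proof eventually_elim
    case (elim s)
    show ?case
    proof
      assume sS: "s \<in> S"
      have un: "unit_normal M (h s) (N (h s))" using UND(3) elim(2) hM sS by auto
      have "N (h s) = n s \<or> N (h s) = - n s" using normals_pm[OF surf hM[rule_format, OF sS] nn[rule_format, OF sS] un] .
      moreover have "norm (n s) = 1" using nn sS unfolding unit_normal_def by auto
      moreover have tw: "norm (n s + n s) = 2" using \<open>norm (n s) = 1\<close>
        by (metis norm_scaleR scaleR_2 abs_numeral mult.right_neutral)
      ultimately show "n s = Nt s" using sig(1) elim(1) unfolding Nt_def
        by auto
    qed
  qed
  then obtain d where d: "d > 0" "\<And>s. s \<in> S \<Longrightarrow> s \<noteq> t \<Longrightarrow> dist s t < d \<Longrightarrow> n s = Nt s"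
    unfolding eventually_at by blast
  have lin: "linear D" using UND(5) has_derivative_linear by blast
  have "(h has_derivative (\<lambda>u. u *\<^sub>R T)) (at t)" using hd by (simp add: has_vector_derivative_def)
  hence "((\<lambda>s. N (h s)) has_derivative (\<lambda>u. D (u *\<^sub>R T))) (at t)"
    using has_derivative_compose[of h _ t UNIV N D] UND(5) by blast
  hence "(Nt has_derivative (\<lambda>u. \<sigma> *\<^sub>R D (u *\<^sub>R T))) (at t)"
    unfolding Nt_def by (intro derivative_eq_intros) auto
  moreover have "(\<lambda>u. \<sigma> *\<^sub>R D (u *\<^sub>R T)) = (\<lambda>u. u *\<^sub>R ((- \<sigma> * k) *\<^sub>R T))"
    using lin UND(6) by (auto simp: linear_scale)
  ultimately have "(Nt has_vector_derivative ((- \<sigma> * k) *\<^sub>R T)) (at t within S)"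
    unfolding has_vector_derivative_def by (auto intro: has_derivative_at_withinI)
  hence "(n has_vector_derivative ((- \<sigma> * k) *\<^sub>R T)) (at t within S)"
    using d tS sig(2) by (intro has_vector_derivative_transform_within[of Nt _ t S d n]) (auto simp: Nt_def, metis)
  thus ?thesis by blast
qed



lemma core:
  fixes h n :: "real \<Rightarrow> real^3"
  assumes surf: "smooth_surface M" and ab: "\<alpha> \<le> \<beta>"
    and hd: "\<forall>t\<in>{\<alpha>..\<beta>}. (h has_vector_derivative vel h t) (at t)"
    and Td: "\<forall>t\<in>{\<alpha>..\<beta>}. (vel h has_vector_derivative acc h t) (at t)"
    and vnz: "\<forall>t\<in>{\<alpha>..\<beta>}. vel h t \<noteq> 0"
    and ncont: "continuous_on {\<alpha>..\<beta>} n"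
    and nn: "\<forall>t\<in>{\<alpha>..\<beta>}. unit_normal M (h t) (n t)"
    and hyp: "\<forall>t\<in>{\<alpha>..\<beta>}. h t \<in> M \<and> principal_direction M (h t) (vel h t) \<and> geodesic_curvature h n t = c"
  shows "\<exists>S. sphere_or_plane c S \<and> meet_orthogonally_along M S (h ` {\<alpha>..\<beta>})"
proof -
  define I where "I = {\<alpha>..\<beta>}"
  define T where "T = vel h"
  define A where "A = acc h"
  define b where "b s = inverse (norm (T s)) *\<^sub>R cross3 (n s) (T s)" for s
  have hM: "\<forall>s\<in>I. h s \<in> M" using hyp I_def by auto
  have nT: "n s \<bullet> T s = 0" if "s \<in> I" for s
    using hyp nn that unfolding I_def T_def principal_direction_def unit_normal_def by auto
  have nnorm: "norm (n s) = 1" if "s \<in> I" for s using nn that unfolding I_def unit_normal_def by auto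
  have bnorm: "norm (b s) = 1" if "s \<in> I" for s
  proof -
    have "(norm (cross3 (n s) (T s)))\<^sup>2 = (norm (T s))\<^sup>2"
      using norm_cross[of "n s" "T s"] nT[OF that] nnorm[OF that] by simp
    hence "norm (cross3 (n s) (T s)) = norm (T s)" by (simp add: power2_eq_iff_nonneg)
    thus ?thesis using vnz that by (simp add: b_def I_def T_def)
  qed
  have nb: "n s \<bullet> b s = 0" for s by (simp add: b_def dot_cross_self)
  have bT: "b s \<bullet> T s = 0" for s by (simp add: b_def dot_cross_self)
  have db: "(b has_vector_derivative (- c) *\<^sub>R T t) (at t within I)" if tI: "t \<in> I" for t
  proof -
    obtain \<kappa> where k: "(n has_vector_derivative (\<kappa> *\<^sub>R T t)) (at t within I)"
      using n_deriv[OF surf tI ncont[folded I_def] nn[folded I_def] hM] hd hyp tI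
      unfolding I_def T_def by blast
    have TdI: "(T has_vector_derivative A t) (at t within I)"
      using Td tI unfolding I_def T_def A_def by (auto intro: has_vector_derivative_at_within)
    have Tnz: "T t \<noteq> 0" using vnz tI by (simp add: I_def T_def)
    have d1: "(b has_vector_derivative
       (inverse (norm (T t)) *\<^sub>R (cross3 (n t) (A t) + cross3 (\<kappa> *\<^sub>R T t) (T t))
       - ((A t \<bullet> sgn (T t)) / (norm (T t))\<^sup>2) *\<^sub>R cross3 (n t) (T t))) (at t within I)"
      unfolding b_def by (rule deriv_b[OF k TdI Tnz])
    have gc: "c = (A t \<bullet> cross3 (n t) (T t)) / norm (T t) ^ 3"
      using hyp tI unfolding I_def geodesic_curvature_def A_def T_def by auto
    have key: "(T t \<bullet> T t) *\<^sub>R cross3 (n t) (A t) - (T t \<bullet> A t) *\<^sub>R cross3 (n t) (T t)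
               = - (A t \<bullet> cross3 (n t) (T t)) *\<^sub>R T t"
      using key_identity[OF nT[OF tI]] .
    have nTp: "norm (T t) > 0" using Tnz by simp
    have "inverse (norm (T t)) *\<^sub>R (cross3 (n t) (A t) + cross3 (\<kappa> *\<^sub>R T t) (T t))
       - ((A t \<bullet> sgn (T t)) / (norm (T t))\<^sup>2) *\<^sub>R cross3 (n t) (T t)
      = (1 / norm (T t) ^ 3) *\<^sub>R ((T t \<bullet> T t) *\<^sub>R cross3 (n t) (A t) - (T t \<bullet> A t) *\<^sub>R cross3 (n t) (T t))"
      using nTp by (simp add: cross_mult_left sgn_div_norm inner_commute power2_norm_eq_inner[symmetric]
          scaleR_diff_right field_simps power3_eq_cube power2_eq_square)
    also have "\<dots> = (- c) *\<^sub>R T t" unfolding key gc by simp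
    finally show ?thesis using d1 by simp
  qed
  have convI: "convex I" by (simp add: I_def)
  have nonempty: "\<alpha> \<in> I" using ab by (simp add: I_def)
  have Mnormal: "n' \<bullet> b s = 0" if "s \<in> I" "unit_normal M (h s) n'" for s n'
  proof -
    have "n' = n s \<or> n' = - n s"
      using normals_pm[OF surf hM[rule_format, OF that(1)] nn[rule_format, OF that(1)[unfolded I_def]] that(2)] .
    thus ?thesis using nb[of s] by auto
  qed
  show ?thesis
  proof (cases "c = 0")
    case False
    define z where "z s = h s + (1 / c) *\<^sub>R b s" for s
    have "(z has_derivative (\<lambda>u. 0)) (at t within I)" if "t \<in> I" for t
    proof -
      have "(h has_vector_derivative T t) (at t within I)"
        using hd that unfolding I_def T_def by (auto intro: has_vector_derivative_at_within)
      hence "(z has_vector_derivative (T t + (1 / c) *\<^sub>R ((- c) *\<^sub>R T t))) (at t within I)"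
        unfolding z_def using db[OF that] by (intro derivative_eq_intros) auto
      thus ?thesis using False by (simp add: has_vector_derivative_def)
    qed
    then obtain z0 where z0: "\<forall>s\<in>I. z s = z0" using has_derivative_zero_constant[OF convI] by blast
    have hz: "h s - z0 = - (1 / c) *\<^sub>R b s" if "s \<in> I" for s using z0 that by (auto simp: z_def)
    have dist: "dist z0 (h s) = 1 / \<bar>c\<bar>" if "s \<in> I" for s
    proof -
      have "norm (h s - z0) = 1 / \<bar>c\<bar>" using hz[OF that] bnorm[OF that] by simp
      thus ?thesis by (simp add: dist_norm norm_minus_commute)
    qed
    show ?thesis
    proof (intro exI conjI)
      show "sphere_or_plane c (sphere z0 (1 / \<bar>c\<bar>))" using False by (auto simp: sphere_or_plane_def)
      show "meet_orthogonally_along M (sphere z0 (1 / \<bar>c\<bar>)) (h ` {\<alpha>..\<beta>})"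
        unfolding meet_orthogonally_along_def
      proof (intro conjI ballI allI impI)
        show "h ` {\<alpha>..\<beta>} \<subseteq> M \<inter> sphere z0 (1 / \<bar>c\<bar>)" using hM dist by (auto simp: I_def)
      next
        fix p n' m assume p: "p \<in> h ` {\<alpha>..\<beta>}" and un: "unit_normal M p n'" and um: "unit_normal (sphere z0 (1 / \<bar>c\<bar>)) p m"
        then obtain s where s: "s \<in> I" "p = h s" by (auto simp: I_def)
        have q: "norm (p - z0) = 1 / \<bar>c\<bar>" using dist[OF s(1)] s by (simp add: dist_norm norm_minus_commute)
        have "p - z0 \<noteq> 0" using q False by auto
        moreover have "m \<bullet> v = 0" if "v \<bullet> (p - z0) = 0" for v
          using um sphere_tangent[OF q _ that] False unfolding unit_normal_def by auto
        ultimately have "m = ((m \<bullet> (p - z0)) / ((p - z0) \<bullet> (p - z0))) *\<^sub>R (p - z0)"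
          using orth_complement_parallel by blast
        moreover have "n' \<bullet> (p - z0) = 0" using hz[OF s(1)] s Mnormal[OF s(1)] un by simp
        ultimately show "n' \<bullet> m = 0" by (metis inner_scaleR_right mult_zero_right)
      qed
    qed
  next
    case True
    have "(b has_derivative (\<lambda>u. 0)) (at t within I)" if "t \<in> I" for t
      using db[OF that] True by (simp add: has_vector_derivative_def)
    then obtain b0 where b0: "\<forall>s\<in>I. b s = b0" using has_derivative_zero_constant[OF convI] by blast
    have "((\<lambda>s. b0 \<bullet> h s) has_derivative (\<lambda>u. 0)) (at t within I)" if "t \<in> I" for t
    proof -
      have "(h has_vector_derivative T t) (at t within I)"
        using hd that unfolding I_def T_def by (auto intro: has_vector_derivative_at_within)
      hence "(h has_derivative (\<lambda>u. u *\<^sub>R T t)) (at t within I)" by (simp add: has_vector_derivative_def)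
      hence "((\<lambda>s. b0 \<bullet> h s) has_derivative (\<lambda>u. b0 \<bullet> (u *\<^sub>R T t))) (at t within I)"
        by (intro derivative_eq_intros) auto
      moreover have "b0 \<bullet> T t = 0" using bT[of t] b0 that by auto
      ultimately show ?thesis by simp
    qed
    then obtain d where d: "\<forall>s\<in>I. b0 \<bullet> h s = d" using has_derivative_zero_constant[OF convI] by blast
    have b0nz: "b0 \<noteq> 0" using bnorm[OF nonempty] b0 nonempty by auto
    show ?thesis
    proof (intro exI conjI)
      show "sphere_or_plane c {x. b0 \<bullet> x = d}" using True b0nz by (auto simp: sphere_or_plane_def)
      show "meet_orthogonally_along M {x. b0 \<bullet> x = d} (h ` {\<alpha>..\<beta>})"
        unfolding meet_orthogonally_along_def
      proof (intro conjI ballI allI impI)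
        show "h ` {\<alpha>..\<beta>} \<subseteq> M \<inter> {x. b0 \<bullet> x = d}" using hM d by (auto simp: I_def)
      next
        fix p n' m assume p: "p \<in> h ` {\<alpha>..\<beta>}" and un: "unit_normal M p n'" and um: "unit_normal {x. b0 \<bullet> x = d} p m"
        then obtain s where s: "s \<in> I" "p = h s" by (auto simp: I_def)
        have "m \<bullet> v = 0" if "v \<bullet> b0 = 0" for v
          using um plane_tangent[of b0 p d v] d s that unfolding unit_normal_def by (auto simp: inner_commute)
        hence "m = ((m \<bullet> b0) / (b0 \<bullet> b0)) *\<^sub>R b0"
          using orth_complement_parallel b0nz by blast
        moreover have "n' \<bullet> b0 = 0" using Mnormal[OF s(1)] un s b0 by auto
        ultimately show "n' \<bullet> m = 0" by (metis inner_scaleR_right mult_zero_right)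
      qed
    qed
  qed
qed



lemma analytic_hyps:
  assumes "real_analytic_on g J" "t \<in> J"
  shows "(g has_vector_derivative vel g t) (at t) \<and> (vel g has_vector_derivative acc g t) (at t)"
proof -
  have "g differentiable (at t) \<and> (\<lambda>s. vector_derivative g (at s)) differentiable (at t)"
    using analytic_C2[OF assms] .
  thus ?thesis unfolding vel_def acc_def
    using vector_derivative_works by blast
qed

lemma mono_s:
  assumes "\<forall>i<k. s i < s (Suc i)" "j \<le> l" "l \<le> k"
  shows "(s j :: real) \<le> s l"
  using assms(2,3)
proof (induction l)
  case 0 thus ?case by simp
next
  case (Suc l)
  show ?case
  proof (cases "j = Suc l")
    case False
    hence "s j \<le> s l" using Suc by auto
    also have "s l < s (Suc l)" using assms(1) Suc(3) by auto
    finally show ?thesis by simp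
  qed simp
qed

theorem proposition3p3:
  fixes M :: "(real^3) set" and c :: real
  assumes "smooth_surface M"
  shows "(\<forall>g a b n.
            analytic_curve_param g a b \<and> normal_field_along M g n {a..b} \<and>
            lc_piece_hyps M c g n {a..b}
            \<longrightarrow> (\<exists>S. sphere_or_plane c S \<and> meet_orthogonally_along M S (g ` {a..b})))
       \<and> (\<forall>g a b s k n.
            piecewise_analytic_param g a b s k \<and> normal_field_along M g n {a..b} \<and>
            (\<forall>i<k. \<exists>h. analytic_piece g h (s i) (s (Suc i)) \<and>
                        lc_piece_hyps M c h n {s i..s (Suc i)})
            \<longrightarrow> (\<exists>S::nat \<Rightarrow> (real^3) set. \<forall>i<k. sphere_or_plane c (S i) \<and>
                   meet_orthogonally_along M (S i) (g ` {s i..s (Suc i)})))"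
proof (intro conjI allI impI)
  fix g a b n
  assume H: "analytic_curve_param g a b \<and> normal_field_along M g n {a..b} \<and> lc_piece_hyps M c g n {a..b}"
  have ab: "a < b" using H unfolding analytic_curve_param_def by auto
  have an: "\<forall>t\<in>{a..b}. (g has_vector_derivative vel g t) (at t) \<and> (vel g has_vector_derivative acc g t) (at t) \<and> vel g t \<noteq> 0"
    using H unfolding analytic_curve_param_def
  proof (elim conjE disjE exE)
    fix I assume "open I" "{a..b} \<subseteq> I" "real_analytic_on g I" "\<forall>t\<in>I. vel g t \<noteq> 0"
    thus ?thesis using analytic_hyps by blast
  next
    assume "real_analytic_on g UNIV" "\<forall>t. vel g t \<noteq> 0"
    thus ?thesis using analytic_hyps by blast
  qed
  show "\<exists>S. sphere_or_plane c S \<and> meet_orthogonally_along M S (g ` {a..b})"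
    using H an unfolding normal_field_along_def lc_piece_hyps_def
    by (intro core[OF assms]) (use ab in auto)
next
  fix g a b s k n
  assume H: "piecewise_analytic_param g a b s k \<and> normal_field_along M g n {a..b} \<and>
            (\<forall>i<k. \<exists>h. analytic_piece g h (s i) (s (Suc i)) \<and> lc_piece_hyps M c h n {s i..s (Suc i)})"
  have P: "s 0 = a" "s k = b" "\<forall>i<k. s i < s (Suc i)" using H unfolding piecewise_analytic_param_def by auto
  have "\<forall>i. \<exists>S. i < k \<longrightarrow> sphere_or_plane c S \<and> meet_orthogonally_along M S (g ` {s i..s (Suc i)})"
  proof (intro allI)
    fix i
    show "\<exists>S. i < k \<longrightarrow> sphere_or_plane c S \<and> meet_orthogonally_along M S (g ` {s i..s (Suc i)})"
    proof (cases "i < k")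
      case True
      obtain h where h: "analytic_piece g h (s i) (s (Suc i))" "lc_piece_hyps M c h n {s i..s (Suc i)}"
        using H True by blast
      obtain I where I: "open I" "{s i..s (Suc i)} \<subseteq> I" "real_analytic_on h I" "\<forall>t\<in>I. vel h t \<noteq> 0"
        and hg: "\<forall>t\<in>{s i..s (Suc i)}. h t = g t"
        using h(1) unfolding analytic_piece_def by blast
      have sub: "{s i..s (Suc i)} \<subseteq> {a..b}"
        using mono_s[OF P(3), of 0 i] mono_s[OF P(3), of "Suc i" k] True P(1,2) by auto
      have ncont: "continuous_on {s i..s (Suc i)} n"
        using H sub unfolding normal_field_along_def by (blast intro: continuous_on_subset)
      have nn: "\<forall>t\<in>{s i..s (Suc i)}. unit_normal M (h t) (n t)"
        using H sub hg unfolding normal_field_along_def by auto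
      have "\<exists>S. sphere_or_plane c S \<and> meet_orthogonally_along M S (h ` {s i..s (Suc i)})"
        using h(2) I analytic_hyps ncont nn unfolding lc_piece_hyps_def
        by (intro core[OF assms]) (use P(3) True in \<open>auto simp: less_imp_le\<close>)
      moreover have "h ` {s i..s (Suc i)} = g ` {s i..s (Suc i)}" using hg by (intro image_cong) auto
      ultimately show ?thesis by auto
    qed simp
  qed
  then obtain S where "\<forall>i. i < k \<longrightarrow> sphere_or_plane c (S i) \<and> meet_orthogonally_along M (S i) (g ` {s i..s (Suc i)})"
    by metis
  thus "\<exists>S::nat \<Rightarrow> (real^3) set. \<forall>i<k. sphere_or_plane c (S i) \<and>
                   meet_orthogonally_along M (S i) (g ` {s i..s (Suc i)})" by blast
qed

end
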